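(* Let $T\ge1$ and $0<\eta\le\frac{1}{5\sqrt T}$, and suppose $d:=\max\{25\eta^2T^2,1\}$ is a positive integer. Let $f(w)=\max\{0,\max_{i\in[d]}(\frac{1}{\sqrt d}-w[i]-\frac{\eta i}{4d})\}$ on $\mathbb R^d$ and run unprojected GD $w_1=0$, $w_{t+1}=w_t-\eta\nabla f(w_t)$ for $1\le t<T$. Then (i) $w_t\in\mathbb B^d$ (the closed unit ball) for all $t\in[T]$; and (ii) for every $m\in\{1,\dots,T\}$, the suffix average $w_{T,m}=\frac1m\sum_{i=1}^m w_{T-i+1}$ satisfies $$f(w_{T,m})-\inf_{w\in\mathbb R^d}f(w)\ \ge\ \min\Big\{\frac14,\ \frac{1}{20\eta T}\Big\}.$$
   Context: $w[i]$ denotes the $i$-th coordinate of $w$. *)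

theory Defs
  imports Complex_Main
begin

text \<open>Vectors in R^d are represented as functions nat => real; only the
coordinates 1..d are relevant (w[i] = w i).\<close>

definition hpiece :: "nat \<Rightarrow> real \<Rightarrow> (nat \<Rightarrow> real) \<Rightarrow> nat \<Rightarrow> real" where
  "hpiece d \<eta> w i = 1 / sqrt (real d) - w i - \<eta> * real i / (4 * real d)"

definition hardf :: "nat \<Rightarrow> real \<Rightarrow> (nat \<Rightarrow> real) \<Rightarrow> real" where
  "hardf d \<eta> w = max 0 (Max (hpiece d \<eta> w ` {1..d}))"

definition hardgrad :: "nat \<Rightarrow> real \<Rightarrow> (nat \<Rightarrow> real) \<Rightarrow> (nat \<Rightarrow> real)" where
  "hardgrad d \<eta> w =
     (let M = Max (hpiece d \<eta> w ` {1..d});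
          k = (LEAST i. i \<in> {1..d} \<and> hpiece d \<eta> w i = M)
      in if M > 0 then (\<lambda>i. if i = k then -1 else 0) else (\<lambda>_. 0))"

definition eucl_norm :: "nat \<Rightarrow> (nat \<Rightarrow> real) \<Rightarrow> real" where
  "eucl_norm d w = sqrt (\<Sum>i=1..d. (w i)^2)"

end

theory Submission
  imports Defs
begin

definition cnt :: "nat \<Rightarrow> nat \<Rightarrow> nat \<Rightarrow> nat" where
  "cnt d s i = s div d + (if i \<le> s mod d then 1 else 0)"

definition Wv :: "nat \<Rightarrow> real \<Rightarrow> nat \<Rightarrow> nat \<Rightarrow> real" where
  "Wv d \<eta> s = (\<lambda>i. if 1 \<le> i \<and> i \<le> d then \<eta> * real (cnt d s i) else 0)"

lemma cnt_Suc:
  assumes "d \<ge> 1" "1 \<le> i" "i \<le> d"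
  shows "cnt d (Suc s) i = cnt d s i + (if i = s mod d + 1 then 1 else 0)"
proof -
  have "s mod d < d" using assms by simp
  then show ?thesis using assms
    unfolding cnt_def by (auto simp: div_Suc mod_Suc)
qed

lemma piece_lt:
  assumes "d \<ge> 1" "\<eta> > 0" "1 \<le> i" "i \<le> d" "i \<noteq> s mod d + 1"
  shows "hpiece d \<eta> (Wv d \<eta> s) i < hpiece d \<eta> (Wv d \<eta> s) (s mod d + 1)"
proof -
  define q where "q = s div d"
  define r where "r = s mod d"
  have rd: "r < d" using assms unfolding r_def by simp
  have dpos: "real d > 0" using assms by simp
  have e2: "hpiece d \<eta> (Wv d \<eta> s) (s mod d + 1) = 1/sqrt d - \<eta> * real q - \<eta> * real (r+1) / (4 * real d)"
    using rd unfolding hpiece_def Wv_def cnt_def q_def r_def by auto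
  show ?thesis
  proof (cases "i \<le> r")
    case True
    have e1: "hpiece d \<eta> (Wv d \<eta> s) i = 1/sqrt d - \<eta> * (real q + 1) - \<eta> * real i / (4 * real d)"
      using True assms unfolding hpiece_def Wv_def cnt_def q_def r_def by auto
    have "real (r+1) \<le> real d" using rd by simp
    then have "\<eta> * real (r+1) \<le> \<eta> * real d" using assms(2) by simp
    then have "\<eta> * real (r+1) / (4 * real d) \<le> \<eta> / 4"
      using dpos by (simp add: field_simps)
    moreover have "\<eta> * real i / (4 * real d) \<ge> 0" using assms dpos by simp
    moreover have "\<eta> * (real q + 1) = \<eta> * real q + \<eta>" by (simp add: algebra_simps)
    ultimately show ?thesis using assms(2) unfolding e1 e2 by linarith
  next
    case False
    then have "i > r + 1" using assms(5) unfolding r_def by auto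
    then have "real (r+1) < real i" by linarith
    then have "\<eta> * real (r+1) < \<eta> * real i" using assms(2) by simp
    then have "\<eta> * real (r+1) / (4 * real d) < \<eta> * real i / (4 * real d)"
      using dpos by (simp add: divide_strict_right_mono)
    moreover have e1: "hpiece d \<eta> (Wv d \<eta> s) i = 1/sqrt d - \<eta> * real q - \<eta> * real i / (4 * real d)"
      using False assms unfolding hpiece_def Wv_def cnt_def q_def r_def by auto
    ultimately show ?thesis unfolding e2 by linarith
  qed
qed

lemma grad_W:
  assumes "d \<ge> 1" "\<eta> > 0"
  shows "hardgrad d \<eta> (Wv d \<eta> s) =
     (if hpiece d \<eta> (Wv d \<eta> s) (s mod d + 1) > 0
      then (\<lambda>i. if i = s mod d + 1 then -1 else 0) else (\<lambda>_. 0))"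
proof -
  let ?h = "hpiece d \<eta> (Wv d \<eta> s)"
  let ?j = "s mod d + 1"
  have jin: "?j \<in> {1..d}" using assms by (simp add: Suc_leI)
  have M: "Max (?h ` {1..d}) = ?h ?j"
  proof (rule Max_eqI)
    show "finite (?h ` {1..d})" by simp
    show "?h ?j \<in> ?h ` {1..d}" using jin by blast
    fix y assume "y \<in> ?h ` {1..d}"
    then obtain i where "i \<in> {1..d}" "y = ?h i" by blast
    then show "y \<le> ?h ?j" using piece_lt[OF assms, of i s] by (cases "i = ?j") auto
  qed
  have L: "(LEAST i. i \<in> {1..d} \<and> ?h i = ?h ?j) = ?j"
  proof (rule Least_equality)
    show "?j \<in> {1..d} \<and> ?h ?j = ?h ?j" using jin by simp
    fix y assume "y \<in> {1..d} \<and> ?h y = ?h ?j"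
    then show "?j \<le> y" using piece_lt[OF assms, of y s] by (cases "y = ?j") auto
  qed
  show ?thesis unfolding hardgrad_def Let_def M L by simp
qed

lemma step_W:
  assumes "d \<ge> 1" "\<eta> > 0"
  shows "(\<lambda>i. Wv d \<eta> s i - \<eta> * hardgrad d \<eta> (Wv d \<eta> s) i) =
     (if hpiece d \<eta> (Wv d \<eta> s) (s mod d + 1) > 0 then Wv d \<eta> (Suc s) else Wv d \<eta> s)"
proof -
  have jd: "Suc (s mod d) \<le> d" using assms by (simp add: Suc_leI)
  show ?thesis
    unfolding grad_W[OF assms]
    by (auto simp: fun_eq_iff Wv_def cnt_Suc[OF assms(1)] algebra_simps jd)
qed


lemma norm_W:
  assumes d1: "d \<ge> 1" and eta: "\<eta> > 0" and sT: "s \<le> T" and Tge: "T \<ge> 1" and A: "25 * \<eta>^2 * real T \<le> 1"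
    and dge: "real d \<ge> 25 * \<eta>^2 * (real T)^2"
    and dcase: "real d = 1 \<or> real d = 25 * \<eta>^2 * (real T)^2"
  shows "eucl_norm d (Wv d \<eta> s) \<le> 1"
proof -
  define q where "q = s div d"
  have dpos: "real d > 0" using d1 by simp
  have dq: "real d * real q \<le> real T"
  proof -
    have "d * q \<le> s" unfolding q_def by simp
    then have "d * q \<le> T" using sT by simp
    then show ?thesis by (metis of_nat_le_iff of_nat_mult)
  qed
  have T1: "\<eta>^2 * real T \<le> 1/25" using A by simp
  have term1: "\<eta>^2 * (real d * (real q)^2) \<le> 1/25"
  proof -
    have "real d * (\<eta>^2 * (real d * (real q)^2)) = \<eta>^2 * (real d * real q)^2"
      by (simp add: power2_eq_square algebra_simps)
    also have "\<dots> \<le> \<eta>^2 * (real T)^2"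
      using dq by (intro mult_left_mono power_mono) (auto simp: mult_nonneg_nonneg)
    also have "\<dots> \<le> real d * (1/25)" using dge by simp
    finally show ?thesis using dpos by (simp add: mult_le_cancel_left_pos)
  qed
  have term2: "\<eta>^2 * (real d * real q) \<le> 1/25"
  proof -
    have "\<eta>^2 * (real d * real q) \<le> \<eta>^2 * real T" using dq by (simp add: mult_left_mono)
    then show ?thesis using T1 by simp
  qed
  have term3: "\<eta>^2 * real d \<le> 1/25"
    using dcase
  proof
    assume "real d = 1"
    moreover have "\<eta>^2 \<le> \<eta>^2 * real T"
      using assms by (simp add: mult_le_cancel_left1)
    ultimately show ?thesis using T1 by simp
  next
    assume h: "real d = 25 * \<eta>^2 * (real T)^2"
    have "\<eta>^2 * real d = (25 * \<eta>^2 * real T) * (\<eta>^2 * real T)"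
      unfolding h by (simp add: power2_eq_square)
    also have "\<dots> \<le> 1 * (1/25)"
      using A T1 by (intro mult_mono) auto
    finally show ?thesis by simp
  qed
  have each: "(Wv d \<eta> s i)^2 \<le> \<eta>^2 * (real q + 1)^2" if "i \<in> {1..d}" for i
  proof -
    have "cnt d s i \<le> q + 1" unfolding cnt_def q_def by simp
    then have "real (cnt d s i) \<le> real q + 1" by linarith
    then have "(real (cnt d s i))^2 \<le> (real q + 1)^2" by (intro power_mono) auto
    then show ?thesis using that unfolding Wv_def
      by (simp add: power_mult_distrib mult_left_mono)
  qed
  have "(\<Sum>i=1..d. (Wv d \<eta> s i)^2) \<le> (\<Sum>i=1..d. \<eta>^2 * (real q + 1)^2)"
    by (rule sum_mono) (use each in auto)
  also have "\<dots> = \<eta>^2 * (real d * (real q)^2) + 2 * (\<eta>^2 * (real d * real q)) + \<eta>^2 * real d"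
    by (simp add: power2_eq_square algebra_simps)
  also have "\<dots> \<le> 1" using term1 term2 term3 by linarith
  finally show ?thesis unfolding eucl_norm_def by simp
qed

lemma coordd_W:
  assumes d1: "d \<ge> 1" and "s \<le> T - 1" and "T \<ge> 1"
  shows "Wv d \<eta> s d = \<eta> * real (s div d)" and "real (s div d) \<le> (real T - 1) / real d"
proof -
  have "s mod d < d" using d1 by simp
  then show "Wv d \<eta> s d = \<eta> * real (s div d)" using d1 \<open>s mod d < d\<close> unfolding Wv_def cnt_def by auto
  have "d * (s div d) \<le> s" by simp
  then have "real d * real (s div d) \<le> real s" by (metis of_nat_le_iff of_nat_mult)
  moreover have "real s \<le> real T - 1" using assms by (simp add: of_nat_diff)
  ultimately show "real (s div d) \<le> (real T - 1) / real d" using d1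
    by (simp add: field_simps)
qed


lemma final_arith:
  assumes Tge: "T \<ge> 1" and eta: "\<eta> > 0" and A: "25 * \<eta>^2 * real T \<le> 1"
    and dd: "real d = max (25 * \<eta>^2 * (real T)^2) 1"
  shows "1 / sqrt (real d) - \<eta> * (real T - 1) / real d - \<eta> / 4 \<ge> min (1/4) (1 / (20 * \<eta> * real T))"
proof (cases "25 * \<eta>^2 * (real T)^2 \<le> 1")
  case True
  then have d: "real d = 1" using dd by simp
  have "(5 * \<eta> * real T)^2 \<le> 1^2" using True by (simp add: power_mult_distrib)
  then have u: "5 * \<eta> * real T \<le> 1"
    by (rule power2_le_imp_le) simp
  have "\<eta> \<le> \<eta> * real T" using eta Tge by simp
  then have "1 - \<eta> * (real T - 1) - \<eta> / 4 \<ge> 1/4" using u eta by (simp add: algebra_simps)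
  then show ?thesis using d by simp
next
  case False
  then have d: "real d = (5 * \<eta> * real T)^2" using dd by (simp add: power_mult_distrib)
  define u where "u = \<eta> * real T"
  have upos: "u > 0" using eta Tge unfolding u_def by simp
  have sd: "sqrt (real d) = 5 * u" using d upos unfolding u_def by simp
  have d2: "real d = 25 * u^2" using d unfolding u_def by (simp add: power_mult_distrib)
  have t1: "1 / sqrt (real d) = 4 / (20 * u)" unfolding sd by simp
  have t2: "\<eta> * (real T - 1) / real d \<le> 1 / (25 * u)"
  proof -
    have "\<eta> * (real T - 1) \<le> u" unfolding u_def using eta by (simp add: algebra_simps)
    then have "\<eta> * (real T - 1) / real d \<le> u / real d"
      using d2 upos by (intro divide_right_mono) auto
    also have "u / real d = 1 / (25 * u)" unfolding d2 using upos by (simp add: power2_eq_square)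
    finally show ?thesis .
  qed
  have t3: "\<eta> / 4 \<le> 1 / (100 * u)"
  proof -
    have "\<eta> * u = \<eta>^2 * real T" unfolding u_def by (simp add: power2_eq_square)
    then have "\<eta> * u \<le> 1/25" using A by simp
    then show ?thesis using upos by (simp add: field_simps)
  qed
  have "1 / (25 * u) + 1 / (100 * u) = 5 / (100 * u)" using upos by (simp add: field_simps)
  moreover have "4 / (20 * u) = 20 / (100 * u)" by simp
  moreover have "1 / (20 * u) = 5 / (100 * u)" by simp
  moreover have "5 / (100 * u) \<ge> 0" using upos by simp
  ultimately have "1 / sqrt (real d) - \<eta> * (real T - 1) / real d - \<eta> / 4 \<ge> 1 / (20 * u)"
    using t1 t2 t3 by linarith
  then show ?thesis unfolding u_def by (simp add: mult.assoc)
qed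


theorem mainTheorem13:
  fixes T d :: nat and \<eta> :: real and w :: "nat \<Rightarrow> nat \<Rightarrow> real"
  assumes "T \<ge> 1"
    and "0 < \<eta>" and "\<eta> \<le> 1 / (5 * sqrt (real T))"
    and "real d = max (25 * \<eta>^2 * (real T)^2) 1"
    and "w 1 = (\<lambda>_. 0)"
    and "\<And>t. 1 \<le> t \<Longrightarrow> t < T \<Longrightarrow>
           w (Suc t) = (\<lambda>i. w t i - \<eta> * hardgrad d \<eta> (w t) i)"
  shows "(\<forall>t\<in>{1..T}. eucl_norm d (w t) \<le> 1) \<and>
         (\<forall>m\<in>{1..T}.
            hardf d \<eta> (\<lambda>i. (1 / real m) * (\<Sum>k=1..m. w (T - k + 1) i))
              - (INF v. hardf d \<eta> v)
            \<ge> min (1/4) (1 / (20 * \<eta> * real T)))"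
proof -
  note Tge = assms(1) and eta = assms(2) and dd = assms(4)
  have d1: "d \<ge> 1" using dd by linarith
  have dpos: "real d > 0" using d1 by simp
  have sT: "sqrt (real T) \<ge> 1" using Tge by simp
  have "5 * \<eta> * sqrt (real T) \<le> 1"
    using assms(3) sT by (simp add: field_simps)
  then have "(5 * \<eta> * sqrt (real T))^2 \<le> 1^2"
    using eta sT by (intro power_mono) auto
  then have A: "25 * \<eta>^2 * real T \<le> 1" by (simp add: power_mult_distrib)
  have dge: "real d \<ge> 25 * \<eta>^2 * (real T)^2" using dd by simp
  have dcase: "real d = 1 \<or> real d = 25 * \<eta>^2 * (real T)^2" using dd by linarith
  have inv: "1 \<le> t \<Longrightarrow> t \<le> T \<Longrightarrow> \<exists>s. s \<le> t - 1 \<and> w t = Wv d \<eta> s" for t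
  proof (induction t)
    case 0 then show ?case by simp
  next
    case (Suc t)
    show ?case
    proof (cases "t = 0")
      case True
      have "Wv d \<eta> 0 = (\<lambda>_. 0)" unfolding Wv_def cnt_def by auto
      then show ?thesis using True assms(5) by auto
    next
      case False
      then obtain s where s: "s \<le> t - 1" "w t = Wv d \<eta> s" using Suc by auto
      have "w (Suc t) = (\<lambda>i. Wv d \<eta> s i - \<eta> * hardgrad d \<eta> (Wv d \<eta> s) i)"
        using assms(6)[of t] False Suc.prems s(2) by simp
      also have "\<dots> = (if hpiece d \<eta> (Wv d \<eta> s) (s mod d + 1) > 0 then Wv d \<eta> (Suc s) else Wv d \<eta> s)"
        by (rule step_W[OF d1 eta])
      finally have ws: "w (Suc t) = (if hpiece d \<eta> (Wv d \<eta> s) (s mod d + 1) > 0 then Wv d \<eta> (Suc s) else Wv d \<eta> s)" .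
      show ?thesis
      proof (cases "hpiece d \<eta> (Wv d \<eta> s) (s mod d + 1) > 0")
        case True
        then have "w (Suc t) = Wv d \<eta> (Suc s)" using ws by simp
        moreover have "Suc s \<le> Suc t - 1" using s(1) False by simp
        ultimately show ?thesis by blast
      next
        case F: False
        then have "w (Suc t) = Wv d \<eta> s" using ws by simp
        moreover have "s \<le> Suc t - 1" using s(1) False by simp
        ultimately show ?thesis by blast
      qed
    qed
  qed
  have part1: "\<forall>t\<in>{1..T}. eucl_norm d (w t) \<le> 1"
  proof
    fix t assume t: "t \<in> {1..T}"
    then obtain s where s: "s \<le> t - 1" "w t = Wv d \<eta> s" using inv by auto
    have "s \<le> T" using s t by auto
    then show "eucl_norm d (w t) \<le> 1" unfolding s(2)
      by (rule norm_W[OF d1 eta _ Tge A dge dcase])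
  qed
  have Inf0: "(INF v. hardf d \<eta> v) = 0"
  proof -
    have ge0: "hardf d \<eta> v \<ge> 0" for v unfolding hardf_def by simp
    have "hardf d \<eta> (\<lambda>_. 1) = 0"
    proof -
      have "1 / sqrt (real d) \<le> 1" using d1 by simp
      then have "hpiece d \<eta> (\<lambda>_. 1) i < 0" if "i \<in> {1..d}" for i
      proof -
        have "\<eta> * real i / (4 * real d) > 0" using eta dpos that by simp
        then show ?thesis unfolding hpiece_def using \<open>1 / sqrt (real d) \<le> 1\<close> by linarith
      qed
      moreover have "Max (hpiece d \<eta> (\<lambda>_. 1) ` {1..d}) \<in> hpiece d \<eta> (\<lambda>_. 1) ` {1..d}"
        using d1 by (intro Max_in) auto
      ultimately have "Max (hpiece d \<eta> (\<lambda>_. 1) ` {1..d}) < 0" by auto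
      then show ?thesis unfolding hardf_def by simp
    qed
    moreover have "(INF v. hardf d \<eta> v) \<le> hardf d \<eta> (\<lambda>_. 1)"
      by (rule cINF_lower) (auto intro: bdd_belowI[of _ 0] simp: ge0)
    moreover have "(INF v. hardf d \<eta> v) \<ge> 0"
      by (rule cINF_greatest) (auto simp: ge0)
    ultimately show ?thesis by linarith
  qed
  have part2: "\<forall>m\<in>{1..T}.
            hardf d \<eta> (\<lambda>i. (1 / real m) * (\<Sum>k=1..m. w (T - k + 1) i))
              - (INF v. hardf d \<eta> v)
            \<ge> min (1/4) (1 / (20 * \<eta> * real T))"
  proof
    fix m assume m: "m \<in> {1..T}"
    define g where "g = (\<lambda>i. (1 / real m) * (\<Sum>k=1..m. w (T - k + 1) i))"
    have each: "w (T - k + 1) d \<le> \<eta> * ((real T - 1) / real d)" if k: "k \<in> {1..m}" for k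
    proof -
      have "T - k + 1 \<in> {1..T}" using k m by auto
      then have "\<exists>s. s \<le> T - k + 1 - 1 \<and> w (T - k + 1) = Wv d \<eta> s"
        by (intro inv) auto
      then obtain s where s: "s \<le> T - k + 1 - 1" "w (T - k + 1) = Wv d \<eta> s" by blast
      have sT1: "s \<le> T - 1" using s(1) k by auto
      have "\<eta> * real (s div d) \<le> \<eta> * ((real T - 1) / real d)"
        using coordd_W(2)[OF d1 sT1 Tge] eta by (intro mult_left_mono) auto
      then show ?thesis unfolding s(2) coordd_W(1)[OF d1 sT1 Tge] .
    qed
    have "(\<Sum>k=1..m. w (T - k + 1) d) \<le> (\<Sum>k=1..m. \<eta> * ((real T - 1) / real d))"
      by (rule sum_mono) (use each in auto)
    then have "(\<Sum>k=1..m. w (T - k + 1) d) \<le> real m * (\<eta> * ((real T - 1) / real d))" by simp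
    then have "(1 / real m) * (\<Sum>k=1..m. w (T - k + 1) d) \<le> (1 / real m) * (real m * (\<eta> * ((real T - 1) / real d)))"
      by (rule mult_left_mono) simp
    also have "\<dots> = \<eta> * (real T - 1) / real d" using m by simp
    finally have gd: "g d \<le> \<eta> * (real T - 1) / real d" unfolding g_def .
    have "hpiece d \<eta> g d \<le> Max (hpiece d \<eta> g ` {1..d})"
      using d1 by (intro Max_ge) auto
    then have "hardf d \<eta> g \<ge> hpiece d \<eta> g d" unfolding hardf_def by simp
    moreover have "hpiece d \<eta> g d = 1 / sqrt (real d) - g d - \<eta> / 4"
      unfolding hpiece_def using dpos by simp
    ultimately have "hardf d \<eta> g \<ge> 1 / sqrt (real d) - \<eta> * (real T - 1) / real d - \<eta> / 4"
      using gd by linarith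
    then have "hardf d \<eta> g \<ge> min (1/4) (1 / (20 * \<eta> * real T))"
      using final_arith[OF Tge eta A dd] by linarith
    then show "hardf d \<eta> (\<lambda>i. (1 / real m) * (\<Sum>k=1..m. w (T - k + 1) i))
              - (INF v. hardf d \<eta> v) \<ge> min (1/4) (1 / (20 * \<eta> * real T))"
      using Inf0 unfolding g_def by linarith
  qed
  show ?thesis using part1 part2 by blast
qed

end
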